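(* The closure of the circuit graph, $\operatorname{cl}G_X(\mathcal{A})$, contains no lines.
   Context: $X\subset\mathbb{R}^n$ is a nonempty closed convex set and $\mathcal{A}\subset\mathbb{R}^n$ is a nonempty finite set such that the functions $x\mapsto\exp(\alpha^Tx)$, $\alpha\in\mathcal{A}$, are linearly independent on $X$. $\mathbb{R}^{\mathcal{A}}$ denotes real vectors indexed by $\mathcal{A}$. $\mathcal{A}\nu=\sum_\alpha\alpha\nu_\alpha$. $\sigma_X(y)=\sup\{y^Tx:x\in X\}$. $N_\beta=\{\nu\in\mathbb{R}^{\mathcal{A}}:\nu_\alpha\ge0\ \forall\alpha\neq\beta,\ \sum_\alpha\nu_\alpha=0\}$. A vector $\nu^\star\in N_\beta$ is an $X$-circuit of $\mathcal{A}$ if (1) $\nu^\star\neq0$, (2) $\sigma_X(-\mathcal{A}\nu^\star)<\infty$, and (3) $\nu^\star$ cannot be written as a convex combination of two non-proportional vectors $\nu^{(1)},\nu^{(2)}\in N_\beta$ such that the map $\nu\mapsto\sigma_X(-\mathcal{A}\nu)$ is affine on the segment $[\nu^{(1)},\nu^{(2)}]$. $\Lambda_X(\mathcal{A})$ is the set of all $X$-circuits $\lambda$ (over all $\beta\in\mathcal{A}$) normalized so that the unique negative entry equals $-1$. The functional form of $\lambda\in\Lambda_X(\mathcal{A})$ is $\phi_\lambda=(\lambda,\sigma_X(-\mathcal{A}\lambda))\in\mathbb{R}^{\mathcal{A}}\times\mathbb{R}$. The circuit graph is $G_X(\mathcal{A})=\operatorname{cone}(\{\phi_\lambda:\lambda\in\Lambda_X(\mathcal{A})\}\cup\{(0,1)\})\subset\mathbb{R}^{\mathcal{A}}\times\mathbb{R}$.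 *)

theory Defs
  imports "HOL-Analysis.Analysis"
begin

(* Vectors in R^A are modelled as functions  real^'n => real  that vanish off A. *)

definition supp_fun :: "(real^'n) set \<Rightarrow> real^'n \<Rightarrow> ereal" where
  "supp_fun X y = (SUP x\<in>X. ereal (y \<bullet> x))"

definition Amul :: "(real^'n) set \<Rightarrow> (real^'n \<Rightarrow> real) \<Rightarrow> real^'n" where
  "Amul A \<nu> = (\<Sum>\<alpha>\<in>A. \<nu> \<alpha> *\<^sub>R \<alpha>)"

definition exp_lin_indep :: "(real^'n) set \<Rightarrow> (real^'n) set \<Rightarrow> bool" where
  "exp_lin_indep X A \<longleftrightarrow>
     (\<forall>c :: real^'n \<Rightarrow> real. (\<forall>x\<in>X. (\<Sum>\<alpha>\<in>A. c \<alpha> * exp (\<alpha> \<bullet> x)) = 0) \<longrightarrow> (\<forall>\<alpha>\<in>A. c \<alpha> = 0))"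

definition Nset :: "(real^'n) set \<Rightarrow> real^'n \<Rightarrow> (real^'n \<Rightarrow> real) set" where
  "Nset A \<beta> = {\<nu>. (\<forall>\<alpha>. \<alpha> \<notin> A \<longrightarrow> \<nu> \<alpha> = 0) \<and> (\<forall>\<alpha>\<in>A. \<alpha> \<noteq> \<beta> \<longrightarrow> \<nu> \<alpha> \<ge> 0)
                  \<and> (\<Sum>\<alpha>\<in>A. \<nu> \<alpha>) = 0}"

definition sigA :: "(real^'n) set \<Rightarrow> (real^'n) set \<Rightarrow> (real^'n \<Rightarrow> real) \<Rightarrow> ereal" where
  "sigA X A \<nu> = supp_fun X (- Amul A \<nu>)"

definition affine_on_seg :: "(real^'n) set \<Rightarrow> (real^'n) set \<Rightarrow> (real^'n \<Rightarrow> real) \<Rightarrow> (real^'n \<Rightarrow> real) \<Rightarrow> bool" where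
  "affine_on_seg X A \<nu>1 \<nu>2 \<longleftrightarrow>
     sigA X A \<nu>1 \<noteq> \<infinity> \<and> sigA X A \<nu>1 \<noteq> - \<infinity> \<and> sigA X A \<nu>2 \<noteq> \<infinity> \<and> sigA X A \<nu>2 \<noteq> - \<infinity> \<and>
     (\<forall>t\<in>{0..1::real}. sigA X A (\<lambda>\<alpha>. (1 - t) * \<nu>1 \<alpha> + t * \<nu>2 \<alpha>)
         = ereal ((1 - t) * real_of_ereal (sigA X A \<nu>1) + t * real_of_ereal (sigA X A \<nu>2)))"

definition proportional :: "('a \<Rightarrow> real) \<Rightarrow> ('a \<Rightarrow> real) \<Rightarrow> bool" where
  "proportional u v \<longleftrightarrow> (\<exists>c. u = (\<lambda>a. c * v a)) \<or> (\<exists>c. v = (\<lambda>a. c * u a))"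

definition X_circuit :: "(real^'n) set \<Rightarrow> (real^'n) set \<Rightarrow> real^'n \<Rightarrow> (real^'n \<Rightarrow> real) \<Rightarrow> bool" where
  "X_circuit X A \<beta> \<nu> \<longleftrightarrow> \<nu> \<in> Nset A \<beta> \<and> \<nu> \<noteq> (\<lambda>_. 0) \<and> sigA X A \<nu> < \<infinity> \<and>
     \<not> (\<exists>\<nu>1 \<nu>2 \<theta>. \<nu>1 \<in> Nset A \<beta> \<and> \<nu>2 \<in> Nset A \<beta> \<and> \<not> proportional \<nu>1 \<nu>2 \<and>
          \<theta> \<in> {0<..<1::real} \<and> \<nu> = (\<lambda>\<alpha>. \<theta> * \<nu>1 \<alpha> + (1 - \<theta>) * \<nu>2 \<alpha>) \<and>
          affine_on_seg X A \<nu>1 \<nu>2)"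

definition Lambda_X :: "(real^'n) set \<Rightarrow> (real^'n) set \<Rightarrow> (real^'n \<Rightarrow> real) set" where
  "Lambda_X X A = {l. \<exists>\<beta>\<in>A. X_circuit X A \<beta> l \<and> l \<beta> = -1}"

definition phi :: "(real^'n) set \<Rightarrow> (real^'n) set \<Rightarrow> (real^'n \<Rightarrow> real) \<Rightarrow> (real^'n \<Rightarrow> real) \<times> real" where
  "phi X A l = (l, real_of_ereal (sigA X A l))"

definition cone_gen :: "(('a \<Rightarrow> real) \<times> real) set \<Rightarrow> (('a \<Rightarrow> real) \<times> real) set" where
  "cone_gen S = {((\<lambda>\<alpha>. \<Sum>i<(k::nat). c i * fst (v i) \<alpha>), (\<Sum>i<k. c i * snd (v i))) | k c v.
                   \<forall>i<k. c i \<ge> 0 \<and> v i \<in> S}"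

definition circuit_graph :: "(real^'n) set \<Rightarrow> (real^'n) set \<Rightarrow> ((real^'n \<Rightarrow> real) \<times> real) set" where
  "circuit_graph X A = cone_gen (phi X A ` Lambda_X X A \<union> {((\<lambda>_. 0), 1)})"

definition contains_line :: "(('a \<Rightarrow> real) \<times> real) set \<Rightarrow> bool" where
  "contains_line S \<longleftrightarrow> (\<exists>p d. d \<noteq> ((\<lambda>_. 0), 0) \<and>
      (\<forall>t::real. ((\<lambda>a. fst p a + t * fst d a), snd p + t * snd d) \<in> S))"

end

theory Submission
  imports Defs
begin


definition FF :: "real \<Rightarrow> ('a \<Rightarrow> real) \<Rightarrow> 'a set \<Rightarrow> ('a \<Rightarrow> real) \<times> real \<Rightarrow> real" where
  "FF c0 w A p = c0 * snd p + (\<Sum>\<alpha>\<in>A. fst p \<alpha> * w \<alpha>)"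

definition NN :: "'a set \<Rightarrow> ('a \<Rightarrow> real) \<times> real \<Rightarrow> real" where
  "NN A p = \<bar>snd p\<bar> + (\<Sum>\<alpha>\<in>A. \<bar>fst p \<alpha>\<bar>)"

lemma cone_bound:
  assumes "finite A" "\<epsilon> \<ge> 0" "\<forall>g\<in>S. \<epsilon> * NN A g \<le> FF c0 w A g" "q \<in> cone_gen S"
  shows "\<epsilon> * NN A q \<le> FF c0 w A q"
proof -
  obtain k c v where q: "q = ((\<lambda>\<alpha>. \<Sum>i<(k::nat). c i * fst (v i) \<alpha>), (\<Sum>i<k. c i * snd (v i)))"
    and cv: "\<forall>i<k. c i \<ge> 0 \<and> v i \<in> S"
    using assms(4) unfolding cone_gen_def by blast
  have F: "FF c0 w A q = (\<Sum>i<k. c i * FF c0 w A (v i))"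
    unfolding q FF_def by (simp add: sum_distrib_left sum_distrib_right sum.distrib algebra_simps sum.swap[of _ A])
  have "NN A q \<le> (\<Sum>i<k. c i * NN A (v i))"
  proof -
    have "\<bar>\<Sum>i<k. c i * snd (v i)\<bar> \<le> (\<Sum>i<k. c i * \<bar>snd (v i)\<bar>)"
      apply (rule order_trans[OF sum_abs])
      using cv by (simp add: abs_mult)
    moreover have "(\<Sum>\<alpha>\<in>A. \<bar>\<Sum>i<k. c i * fst (v i) \<alpha>\<bar>) \<le> (\<Sum>\<alpha>\<in>A. \<Sum>i<k. c i * \<bar>fst (v i) \<alpha>\<bar>)"
      apply (rule sum_mono)
      apply (rule order_trans[OF sum_abs])
      using cv by (simp add: abs_mult)
    ultimately show ?thesis unfolding q NN_def
      by (simp add: sum_distrib_left sum.distrib algebra_simps sum.swap[of _ A])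
  qed
  hence "\<epsilon> * NN A q \<le> \<epsilon> * (\<Sum>i<k. c i * NN A (v i))"
    by (rule mult_left_mono[OF _ assms(2)])
  also have "\<dots> = (\<Sum>i<k. c i * (\<epsilon> * NN A (v i)))"
    by (simp add: sum_distrib_left algebra_simps)
  also have "\<dots> \<le> (\<Sum>i<k. c i * FF c0 w A (v i))"
    apply (rule sum_mono) using cv assms(3) by (simp add: mult_left_mono)
  finally show ?thesis using F by simp
qed

lemma cone_supp:
  assumes "\<forall>g\<in>S. \<forall>\<alpha>. \<alpha> \<notin> A \<longrightarrow> fst g \<alpha> = 0" "q \<in> cone_gen S"
  shows "\<forall>\<alpha>. \<alpha> \<notin> A \<longrightarrow> fst q \<alpha> = 0"
  using assms unfolding cone_gen_def by auto

lemma cont_coord: "continuous_on UNIV (\<lambda>p::('a \<Rightarrow> real) \<times> real. fst p \<alpha>)"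
  by (rule continuous_on_product_then_coordinatewise[OF continuous_on_fst[OF continuous_on_id]])

lemma closed_T:
  assumes "finite A"
  shows "closed {p::('a \<Rightarrow> real) \<times> real. \<epsilon> * NN A p \<le> FF c0 w A p \<and> (\<forall>\<alpha>. \<alpha> \<notin> A \<longrightarrow> fst p \<alpha> = 0)}"
proof -
  have c1: "continuous_on UNIV (\<lambda>p::('a \<Rightarrow> real) \<times> real. \<epsilon> * NN A p)"
    unfolding NN_def by (intro continuous_intros cont_coord)
  have c2: "continuous_on UNIV (\<lambda>p::('a \<Rightarrow> real) \<times> real. FF c0 w A p)"
    unfolding FF_def by (intro continuous_intros cont_coord)
  have "{p::('a \<Rightarrow> real) \<times> real. \<epsilon> * NN A p \<le> FF c0 w A p \<and> (\<forall>\<alpha>. \<alpha> \<notin> A \<longrightarrow> fst p \<alpha> = 0)}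
     = {p. \<epsilon> * NN A p \<le> FF c0 w A p} \<inter> (\<Inter>\<alpha>\<in>-A. {p. fst p \<alpha> = 0})" by auto
  moreover have "closed {p::('a \<Rightarrow> real) \<times> real. \<epsilon> * NN A p \<le> FF c0 w A p}"
    by (rule closed_Collect_le[OF c1 c2])
  moreover have "closed (\<Inter>\<alpha>\<in>-A. {p::('a \<Rightarrow> real) \<times> real. fst p \<alpha> = 0})"
    by (intro closed_INT ballI closed_Collect_eq cont_coord continuous_on_const)
  ultimately show ?thesis by (simp add: closed_Int)
qed

lemma abs_lin_lb: "\<bar>(x::real) + t * y\<bar> \<ge> \<bar>t\<bar> * \<bar>y\<bar> - \<bar>x\<bar>"
proof -
  have "\<bar>t\<bar> * \<bar>y\<bar> = \<bar>t * y\<bar>" by (simp add: abs_mult)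
  thus ?thesis by arith
qed

definition TT where "TT \<epsilon> c0 w A = {p::('a \<Rightarrow> real) \<times> real. \<epsilon> * NN A p \<le> FF c0 w A p \<and> (\<forall>\<alpha>. \<alpha> \<notin> A \<longrightarrow> fst p \<alpha> = 0)}"

lemma no_line_T:
  assumes "finite A" "\<epsilon> > 0"
  shows "\<not> contains_line (TT \<epsilon> c0 w A)"
proof
  assume "contains_line (TT \<epsilon> c0 w A)"
  then obtain p d where d0: "d \<noteq> ((\<lambda>_. 0), 0)" and L0: "\<forall>t::real. ((\<lambda>a. fst p a + t * fst d a), snd p + t * snd d) \<in> TT \<epsilon> c0 w A"
    unfolding contains_line_def by blast
  have L: "\<epsilon> * NN A ((\<lambda>a. fst p a + t * fst d a), snd p + t * snd d) \<le> FF c0 w A ((\<lambda>a. fst p a + t * fst d a), snd p + t * snd d)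
     \<and> (\<forall>\<alpha>. \<alpha> \<notin> A \<longrightarrow> fst p \<alpha> + t * fst d \<alpha> = 0)" for t
    using spec[OF L0, of t] unfolding TT_def by simp
  have supp: "\<alpha> \<notin> A \<Longrightarrow> fst d \<alpha> = 0" for \<alpha>
    using L[of 0] L[of 1] by auto
  have Nd: "NN A d > 0"
  proof (rule ccontr)
    assume "\<not> NN A d > 0"
    moreover have "(\<Sum>\<alpha>\<in>A. \<bar>fst d \<alpha>\<bar>) \<ge> 0" by (simp add: sum_nonneg)
    ultimately have "snd d = 0" "(\<Sum>\<alpha>\<in>A. \<bar>fst d \<alpha>\<bar>) = 0" unfolding NN_def
      by (smt (verit) abs_ge_zero)+
    hence "\<forall>\<alpha>\<in>A. fst d \<alpha> = 0" using assms(1) by (simp add: sum_nonneg_eq_0_iff)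
    hence "fst d = (\<lambda>_. 0)" using supp by auto
    with \<open>snd d = 0\<close> d0 show False by (cases d) auto
  qed
  have FL: "FF c0 w A ((\<lambda>a. fst p a + t * fst d a), snd p + t * snd d) = FF c0 w A p + t * FF c0 w A d" for t
    unfolding FF_def by (simp add: algebra_simps sum.distrib sum_distrib_left)
  have NL: "NN A ((\<lambda>a. fst p a + t * fst d a), snd p + t * snd d) \<ge> \<bar>t\<bar> * NN A d - NN A p" for t
  proof -
    have "\<bar>snd p + t * snd d\<bar> \<ge> \<bar>t\<bar> * \<bar>snd d\<bar> - \<bar>snd p\<bar>"
      by (rule abs_lin_lb)
    moreover have "(\<Sum>\<alpha>\<in>A. \<bar>fst p \<alpha> + t * fst d \<alpha>\<bar>) \<ge> (\<Sum>\<alpha>\<in>A. \<bar>t\<bar> * \<bar>fst d \<alpha>\<bar> - \<bar>fst p \<alpha>\<bar>)"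
      apply (rule sum_mono)
      by (rule abs_lin_lb)
    ultimately show ?thesis unfolding NN_def by (simp add: sum_subtractf sum_distrib_left algebra_simps)
  qed
  define T0 where "T0 = (\<bar>FF c0 w A p\<bar> + \<epsilon> * NN A p) / (\<epsilon> * NN A d) + 1"
  have T0pos: "T0 > 0" unfolding T0_def using assms Nd
    by (smt (verit) NN_def divide_nonneg_pos mult_pos_pos mult_nonneg_nonneg sum_nonneg abs_ge_zero)
  have a: "\<epsilon> * (T0 * NN A d - NN A p) \<le> FF c0 w A p + T0 * FF c0 w A d"
    using L[of T0] FL[of T0] NL[of T0] T0pos assms(2)
    by (smt (verit) mult_left_mono)
  have b: "\<epsilon> * (T0 * NN A d - NN A p) \<le> FF c0 w A p - T0 * FF c0 w A d"
  proof -
    have "T0 * NN A d - NN A p \<le> NN A ((\<lambda>a. fst p a + (-T0) * fst d a), snd p + (-T0) * snd d)"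
      using NL[of "-T0"] T0pos by simp
    hence "\<epsilon> * (T0 * NN A d - NN A p) \<le> \<epsilon> * NN A ((\<lambda>a. fst p a + (-T0) * fst d a), snd p + (-T0) * snd d)"
      using assms(2) by (simp add: mult_left_mono)
    thus ?thesis using L[of "-T0"] FL[of "-T0"] by simp
  qed
  have "\<epsilon> * (T0 * NN A d) \<le> FF c0 w A p + \<epsilon> * NN A p" using a b by (simp add: algebra_simps)
  moreover have "\<epsilon> * (T0 * NN A d) = \<bar>FF c0 w A p\<bar> + \<epsilon> * NN A p + \<epsilon> * NN A d"
    unfolding T0_def using assms Nd by (simp add: field_simps)
  ultimately show False using assms Nd by (smt (verit) mult_pos_pos)
qed



lemma sq_expand:
  fixes l a :: "'a \<Rightarrow> real"
  assumes "finite A" "sum l A = 0"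
  shows "(\<Sum>\<alpha>\<in>A. l \<alpha> * (a \<alpha>)\<^sup>2) = (\<Sum>\<alpha>\<in>A. l \<alpha> * (a \<alpha> - b)\<^sup>2) + 2 * b * (\<Sum>\<alpha>\<in>A. l \<alpha> * a \<alpha>)"
proof -
  have "(\<Sum>\<alpha>\<in>A. l \<alpha> * (a \<alpha> - b)\<^sup>2) = (\<Sum>\<alpha>\<in>A. l \<alpha> * (a \<alpha>)\<^sup>2) - 2 * b * (\<Sum>\<alpha>\<in>A. l \<alpha> * a \<alpha>) + b\<^sup>2 * sum l A"
    by (simp add: power2_eq_square algebra_simps sum.distrib sum_subtractf sum_distrib_left sum_distrib_right)
  thus ?thesis using assms(2) by simp
qed

lemma gen_bound:
  fixes l :: "real^'n \<Rightarrow> real" and Y :: "(real^'n) set"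
  assumes fA: "finite A" and fY: "finite Y" and x0Y: "x0 \<in> Y" and bA: "\<beta> \<in> A"
    and lnn: "\<forall>\<alpha>\<in>A. \<alpha> \<noteq> \<beta> \<longrightarrow> l \<alpha> \<ge> 0" and lb: "l \<beta> = -1" and ls: "sum l A = 0"
    and dl: "\<forall>x\<in>Y. s + (\<Sum>\<alpha>\<in>A. l \<alpha> * (\<alpha> \<bullet> x)) \<ge> 0"
    and qm: "\<forall>\<alpha>\<in>A. \<alpha> \<noteq> \<beta> \<longrightarrow> \<mu> \<le> (\<Sum>x\<in>Y. (\<alpha> \<bullet> (x - x0) - \<beta> \<bullet> (x - x0))\<^sup>2)"
    and Rd: "R = (\<Sum>\<alpha>\<in>A. \<Sum>x\<in>Y. \<bar>\<alpha> \<bullet> (x - x0)\<bar>)"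
    and Kd: "K = 2 * R * (1 + real (card Y)) + 1"
    and R0d: "R0 = (\<Sum>\<alpha>\<in>A. \<bar>\<alpha> \<bullet> x0\<bar>)"
    and mp: "\<mu> > 0" and ed: "\<epsilon> = min 1 (\<mu> / (R0 + 2))"
  shows "\<epsilon> * (\<bar>s\<bar> + (\<Sum>\<alpha>\<in>A. \<bar>l \<alpha>\<bar>))
     \<le> K * real (card Y) * s + (\<Sum>\<alpha>\<in>A. l \<alpha> * (K * (\<Sum>x\<in>Y. \<alpha> \<bullet> x) + (\<Sum>x\<in>Y. (\<alpha> \<bullet> (x - x0))\<^sup>2)))"
proof -
  define e where "e x = (\<Sum>\<alpha>\<in>A. l \<alpha> * (\<alpha> \<bullet> x))" for x
  define dd where "dd x = s + e x" for x
  define D where "D = (\<Sum>x\<in>Y. dd x)"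
  define a where "a \<alpha> x = \<alpha> \<bullet> (x - x0)" for \<alpha> x :: "real^'n"
  have dnn: "x \<in> Y \<Longrightarrow> dd x \<ge> 0" for x using dl unfolding dd_def e_def by auto
  have dx0D: "dd x0 \<le> D" unfolding D_def using dnn fY x0Y by (intro member_le_sum) auto
  have Dnn: "D \<ge> 0" unfolding D_def using dnn by (simp add: sum_nonneg)
  have Ab: "A = insert \<beta> (A - {\<beta>})" using bA by auto
  have S1: "(\<Sum>\<alpha>\<in>A - {\<beta>}. l \<alpha>) = 1"
    using ls lb fA bA by (simp add: sum.remove)
  have Sabs: "(\<Sum>\<alpha>\<in>A. \<bar>l \<alpha>\<bar>) = 2"
  proof -
    have "(\<Sum>\<alpha>\<in>A - {\<beta>}. \<bar>l \<alpha>\<bar>) = (\<Sum>\<alpha>\<in>A - {\<beta>}. l \<alpha>)" using lnn by (intro sum.cong) auto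
    thus ?thesis using S1 lb fA bA by (simp add: sum.remove)
  qed
  have l1: "\<alpha> \<in> A \<Longrightarrow> \<bar>l \<alpha>\<bar> \<le> 1" for \<alpha>
  proof (cases "\<alpha> = \<beta>")
    case True thus ?thesis using lb by simp
  next
    case False
    assume aA: "\<alpha> \<in> A"
    have "l \<alpha> \<le> (\<Sum>\<alpha>\<in>A - {\<beta>}. l \<alpha>)" using False aA lnn fA by (intro member_le_sum) auto
    thus ?thesis using S1 lnn False aA by auto
  qed
  have RHS: "K * real (card Y) * s + (\<Sum>\<alpha>\<in>A. l \<alpha> * (K * (\<Sum>x\<in>Y. \<alpha> \<bullet> x) + (\<Sum>x\<in>Y. (\<alpha> \<bullet> (x - x0))\<^sup>2)))
      = K * D + (\<Sum>x\<in>Y. \<Sum>\<alpha>\<in>A. l \<alpha> * (a \<alpha> x)\<^sup>2)"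
    unfolding D_def dd_def e_def a_def
    by (simp add: sum.distrib sum_distrib_left sum_distrib_right algebra_simps sum.swap[of _ A])
  have inner: "(\<Sum>\<alpha>\<in>A. l \<alpha> * (a \<alpha> x)\<^sup>2) = (\<Sum>\<alpha>\<in>A. l \<alpha> * (a \<alpha> x - a \<beta> x)\<^sup>2) + 2 * a \<beta> x * (dd x - dd x0)" for x
  proof -
    have "(\<Sum>\<alpha>\<in>A. l \<alpha> * a \<alpha> x) = e x - e x0"
      unfolding a_def e_def by (simp add: inner_diff_right algebra_simps sum_subtractf)
    thus ?thesis using sq_expand[OF fA ls, of "\<lambda>\<alpha>. a \<alpha> x" "a \<beta> x"] unfolding dd_def by simp
  qed
  have first: "(\<Sum>x\<in>Y. \<Sum>\<alpha>\<in>A. l \<alpha> * (a \<alpha> x - a \<beta> x)\<^sup>2) \<ge> \<mu>"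
  proof -
    have "(\<Sum>x\<in>Y. \<Sum>\<alpha>\<in>A. l \<alpha> * (a \<alpha> x - a \<beta> x)\<^sup>2) = (\<Sum>\<alpha>\<in>A. l \<alpha> * (\<Sum>x\<in>Y. (a \<alpha> x - a \<beta> x)\<^sup>2))"
      by (simp add: sum_distrib_left sum.swap[of _ Y])
    also have "\<dots> = (\<Sum>\<alpha>\<in>A - {\<beta>}. l \<alpha> * (\<Sum>x\<in>Y. (a \<alpha> x - a \<beta> x)\<^sup>2))"
      using fA bA by (simp add: sum.remove)
    also have "\<dots> \<ge> (\<Sum>\<alpha>\<in>A - {\<beta>}. l \<alpha> * \<mu>)"
      apply (rule sum_mono) using lnn qm unfolding a_def by (auto intro: mult_left_mono)
    moreover have "(\<Sum>\<alpha>\<in>A - {\<beta>}. l \<alpha> * \<mu>) = \<mu>" using S1 by (simp add: sum_distrib_right[symmetric])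
    ultimately show ?thesis by simp
  qed
  have aR: "x \<in> Y \<Longrightarrow> \<bar>a \<beta> x\<bar> \<le> R" for x
  proof -
    assume xY: "x \<in> Y"
    have "\<bar>a \<beta> x\<bar> \<le> (\<Sum>x\<in>Y. \<bar>\<beta> \<bullet> (x - x0)\<bar>)" unfolding a_def using xY fY by (intro member_le_sum) auto
    also have "\<dots> \<le> R" unfolding Rd using bA fA by (intro member_le_sum) (auto simp: sum_nonneg)
    finally show ?thesis .
  qed
  have Rnn: "R \<ge> 0" unfolding Rd by (simp add: sum_nonneg)
  have second: "(\<Sum>x\<in>Y. 2 * a \<beta> x * (dd x - dd x0)) \<ge> - (2 * R * (1 + real (card Y)) * D)"
  proof -
    have "(\<Sum>x\<in>Y. 2 * a \<beta> x * (dd x - dd x0)) \<ge> (\<Sum>x\<in>Y. - (2 * R * (dd x + dd x0)))"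
    proof (rule sum_mono)
      fix x assume xY: "x \<in> Y"
      have "\<bar>a \<beta> x * (dd x - dd x0)\<bar> \<le> R * (dd x + dd x0)"
        unfolding abs_mult using aR[OF xY] dnn[OF xY] dnn[OF x0Y] Rnn
        by (intro mult_mono) auto
      thus "- (2 * R * (dd x + dd x0)) \<le> 2 * a \<beta> x * (dd x - dd x0)" by (simp add: abs_le_iff)
    qed
    also have "(\<Sum>x\<in>Y. - (2 * R * (dd x + dd x0))) = - (2 * R * (D + real (card Y) * dd x0))"
      unfolding D_def by (simp add: sum_negf sum.distrib flip: sum_distrib_left)
    finally have "(\<Sum>x\<in>Y. 2 * a \<beta> x * (dd x - dd x0)) \<ge> - (2 * R * (D + real (card Y) * dd x0))" .
    moreover have "real (card Y) * dd x0 \<le> real (card Y) * D" using dx0D by (simp add: mult_left_mono)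
    hence "2 * R * (D + real (card Y) * dd x0) \<le> 2 * R * (1 + real (card Y)) * D"
      using Rnn mult_left_mono[OF \<open>real (card Y) * dd x0 \<le> real (card Y) * D\<close>, of "2*R"] by (simp add: algebra_simps)
    ultimately show ?thesis by linarith
  qed
  have RHSge: "K * D + (\<Sum>x\<in>Y. \<Sum>\<alpha>\<in>A. l \<alpha> * (a \<alpha> x)\<^sup>2) \<ge> D + \<mu>"
  proof -
    have "(\<Sum>x\<in>Y. \<Sum>\<alpha>\<in>A. l \<alpha> * (a \<alpha> x)\<^sup>2) = (\<Sum>x\<in>Y. \<Sum>\<alpha>\<in>A. l \<alpha> * (a \<alpha> x - a \<beta> x)\<^sup>2) + (\<Sum>x\<in>Y. 2 * a \<beta> x * (dd x - dd x0))"
      by (simp add: inner sum.distrib)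
    thus ?thesis using first second Kd by (simp add: algebra_simps)
  qed
  have sbound: "\<bar>s\<bar> \<le> D + R0"
  proof -
    have "\<bar>e x0\<bar> \<le> R0"
    proof -
      have "\<bar>e x0\<bar> \<le> (\<Sum>\<alpha>\<in>A. \<bar>l \<alpha> * (\<alpha> \<bullet> x0)\<bar>)" unfolding e_def by (rule sum_abs)
      also have "\<dots> \<le> R0" unfolding R0d abs_mult
        apply (rule sum_mono) using l1 by (simp add: mult_left_le_one_le)
      finally show ?thesis .
    qed
    moreover have "s = dd x0 - e x0" unfolding dd_def by simp
    ultimately show ?thesis using dx0D dnn[OF x0Y] by linarith
  qed
  have R0nn: "R0 \<ge> 0" unfolding R0d by (simp add: sum_nonneg)
  have e1: "\<epsilon> \<le> 1" unfolding ed by simp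
  have e0: "\<epsilon> \<ge> 0" unfolding ed using R0nn mp by simp
  have e2: "\<epsilon> * (R0 + 2) \<le> \<mu>"
  proof -
    have "\<epsilon> \<le> \<mu> / (R0 + 2)" unfolding ed by simp
    hence "\<epsilon> * (R0 + 2) \<le> \<mu> / (R0 + 2) * (R0 + 2)" using R0nn by (intro mult_right_mono) auto
    thus ?thesis using R0nn by simp
  qed
  have "\<epsilon> * (\<bar>s\<bar> + 2) \<le> \<epsilon> * (D + R0 + 2)" using sbound e0 by (simp add: mult_left_mono)
  also have "\<dots> = \<epsilon> * D + \<epsilon> * (R0 + 2)" by (simp add: algebra_simps)
  also have "\<dots> \<le> D + \<mu>" proof -
    have "\<epsilon> * D \<le> 1 * D" using e1 Dnn by (rule mult_right_mono)
    thus ?thesis using e2 by linarith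
  qed
  finally show ?thesis using RHS RHSge Sabs by simp
qed



lemma sep:
  assumes "exp_lin_indep X A" "finite A" "\<alpha> \<in> A" "\<gamma> \<in> A" "\<alpha> \<noteq> \<gamma>" "x0 \<in> X"
  shows "\<exists>x\<in>X. (\<alpha> - \<gamma>) \<bullet> x \<noteq> (\<alpha> - \<gamma>) \<bullet> x0"
proof (rule ccontr)
  assume "\<not> ?thesis"
  hence eq: "\<forall>x\<in>X. (\<alpha> - \<gamma>) \<bullet> x = (\<alpha> - \<gamma>) \<bullet> x0" by auto
  define c where "c = (\<alpha> - \<gamma>) \<bullet> x0"
  define f where "f z = (if z = \<alpha> then 1 else 0) + (if z = \<gamma> then - exp c else (0::real))" for z
  have "\<forall>x\<in>X. (\<Sum>z\<in>A. f z * exp (z \<bullet> x)) = 0"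
  proof
    fix x assume xX: "x \<in> X"
    have ax: "\<alpha> \<bullet> x = c + \<gamma> \<bullet> x" using eq xX unfolding c_def by (auto simp: inner_diff_left)
    have "(\<Sum>z\<in>A. f z * exp (z \<bullet> x)) = (\<Sum>z\<in>A. (if z = \<alpha> then exp (z \<bullet> x) else 0)) + (\<Sum>z\<in>A. (if z = \<gamma> then - exp c * exp (z \<bullet> x) else 0))"
      unfolding sum.distrib[symmetric] by (rule sum.cong) (auto simp: f_def algebra_simps)
    also have "\<dots> = exp (\<alpha> \<bullet> x) - exp c * exp (\<gamma> \<bullet> x)" using assms(2-4) by simp
    also have "\<dots> = 0" unfolding ax by (simp add: exp_add)
    finally show "(\<Sum>z\<in>A. f z * exp (z \<bullet> x)) = 0" .
  qed
  hence "\<forall>z\<in>A. f z = 0" using assms(1) unfolding exp_lin_indep_def by blast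
  hence "f \<alpha> = 0" using assms(3) by blast
  thus False using assms(5) unfolding f_def by simp
qed

lemma sig_lower:
  assumes "x \<in> X" "sigA X A l < \<infinity>"
  shows "sigA X A l = ereal (real_of_ereal (sigA X A l))"
    and "real_of_ereal (sigA X A l) + (\<Sum>\<alpha>\<in>A. l \<alpha> * (\<alpha> \<bullet> x)) \<ge> 0"
proof -
  have le: "ereal ((- Amul A l) \<bullet> x) \<le> sigA X A l"
    unfolding sigA_def supp_fun_def using assms(1) by (rule SUP_upper)
  hence nm: "sigA X A l \<noteq> - \<infinity>" by auto
  thus "sigA X A l = ereal (real_of_ereal (sigA X A l))" using assms(2)
    by (cases "sigA X A l") auto
  have "(- Amul A l) \<bullet> x \<le> real_of_ereal (sigA X A l)"
    using le nm assms(2) by (cases "sigA X A l") auto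
  moreover have "(- Amul A l) \<bullet> x = - (\<Sum>\<alpha>\<in>A. l \<alpha> * (\<alpha> \<bullet> x))"
    unfolding Amul_def by (simp add: inner_sum_left)
  ultimately show "real_of_ereal (sigA X A l) + (\<Sum>\<alpha>\<in>A. l \<alpha> * (\<alpha> \<bullet> x)) \<ge> 0" by linarith
qed

theorem lemma5p10:
  fixes X :: "(real^'n) set" and A :: "(real^'n) set"
  assumes "X \<noteq> {}" and "closed X" and "convex X"
    and "finite A" and "A \<noteq> {}"
    and "exp_lin_indep X A"
  shows "\<not> contains_line (closure (circuit_graph X A))"
proof -
  obtain x0 where x0X: "x0 \<in> X" using assms(1) by blast
  define P where "P = {p \<in> A \<times> A. fst p \<noteq> snd p}"
  have fP: "finite P" unfolding P_def using assms(4) by simp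
  define pt where "pt p = (SOME x. x \<in> X \<and> (fst p - snd p) \<bullet> x \<noteq> (fst p - snd p) \<bullet> x0)" for p :: "(real^'n) \<times> (real^'n)"
  have pt: "p \<in> P \<Longrightarrow> pt p \<in> X \<and> (fst p - snd p) \<bullet> pt p \<noteq> (fst p - snd p) \<bullet> x0" for p
    unfolding pt_def P_def
    apply (rule someI_ex)
    using sep[OF assms(6) assms(4) _ _ _ x0X] by (auto, blast)
  define Y where "Y = insert x0 (pt ` P)"
  have fY: "finite Y" unfolding Y_def using fP by simp
  have x0Y: "x0 \<in> Y" unfolding Y_def by simp
  have YX: "Y \<subseteq> X" unfolding Y_def using x0X pt by auto
  define q where "q p = (\<Sum>x\<in>Y. (fst p \<bullet> (x - x0) - snd p \<bullet> (x - x0))\<^sup>2)" for p :: "(real^'n) \<times> (real^'n)"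
  have qpos: "p \<in> P \<Longrightarrow> q p > 0" for p
  proof -
    assume pP: "p \<in> P"
    have "(fst p \<bullet> (pt p - x0) - snd p \<bullet> (pt p - x0))\<^sup>2 > 0"
      using pt[OF pP] by (simp add: inner_diff_left inner_diff_right algebra_simps)
    also have "\<dots> \<le> q p" unfolding q_def using fY pP unfolding Y_def by (intro member_le_sum) auto
    finally show ?thesis .
  qed
  define \<mu> where "\<mu> = Min (insert 1 (q ` P))"
  have mp: "\<mu> > 0" unfolding \<mu>_def using fP qpos by (subst Min_gr_iff) auto
  have qm: "p \<in> P \<Longrightarrow> \<mu> \<le> q p" for p unfolding \<mu>_def using fP by (intro Min_le) auto
  define R where "R = (\<Sum>\<alpha>\<in>A. \<Sum>x\<in>Y. \<bar>\<alpha> \<bullet> (x - x0)\<bar>)"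
  define K where "K = 2 * R * (1 + real (card Y)) + 1"
  define R0 where "R0 = (\<Sum>\<alpha>\<in>A. \<bar>\<alpha> \<bullet> x0\<bar>)"
  define \<epsilon> where "\<epsilon> = min 1 (\<mu> / (R0 + 2))"
  define c0 where "c0 = K * real (card Y)"
  define w where "w \<alpha> = K * (\<Sum>x\<in>Y. \<alpha> \<bullet> x) + (\<Sum>x\<in>Y. (\<alpha> \<bullet> (x - x0))\<^sup>2)" for \<alpha> :: "real^'n"
  have Rnn: "R \<ge> 0" unfolding R_def by (simp add: sum_nonneg)
  have R0nn: "R0 \<ge> 0" unfolding R0_def by (simp add: sum_nonneg)
  have epos: "\<epsilon> > 0" unfolding \<epsilon>_def using mp R0nn by simp
  have cY: "card Y \<ge> 1" using fY x0Y by (metis One_nat_def Suc_leI card_gt_0_iff empty_iff)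
  have ec0: "\<epsilon> \<le> c0"
  proof -
    have "\<epsilon> \<le> 1" unfolding \<epsilon>_def by simp
    also have "1 \<le> K" unfolding K_def using Rnn by simp
    also have "K \<le> c0" unfolding c0_def
    proof -
      have "K * 1 \<le> K * real (card Y)" using cY Rnn K_def by (intro mult_left_mono) auto
      thus "K \<le> K * real (card Y)" by simp
    qed
    finally show ?thesis .
  qed
  define S where "S = phi X A ` Lambda_X X A \<union> {((\<lambda>_. 0), 1)}"
  have Sb: "\<forall>g\<in>S. \<epsilon> * NN A g \<le> FF c0 w A g"
  proof
    fix g assume "g \<in> S"
    then consider "g = ((\<lambda>_. 0), 1)" | l where "l \<in> Lambda_X X A" "g = phi X A l" unfolding S_def by blast
    thus "\<epsilon> * NN A g \<le> FF c0 w A g"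
    proof cases
      case 1 thus ?thesis using ec0 unfolding NN_def FF_def by simp
    next
      case 2
      then obtain \<beta> where bA: "\<beta> \<in> A" and circ: "X_circuit X A \<beta> l" and lb: "l \<beta> = -1"
        unfolding Lambda_X_def by blast
      have lN: "l \<in> Nset A \<beta>" and sfin: "sigA X A l < \<infinity>" using circ unfolding X_circuit_def by auto
      have lnn: "\<forall>\<alpha>\<in>A. \<alpha> \<noteq> \<beta> \<longrightarrow> l \<alpha> \<ge> 0" and ls: "sum l A = 0" using lN unfolding Nset_def by auto
      define s where "s = real_of_ereal (sigA X A l)"
      have dl: "\<forall>x\<in>Y. s + (\<Sum>\<alpha>\<in>A. l \<alpha> * (\<alpha> \<bullet> x)) \<ge> 0"
        using sig_lower(2)[OF _ sfin] YX unfolding s_def by auto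
      have qm': "\<forall>\<alpha>\<in>A. \<alpha> \<noteq> \<beta> \<longrightarrow> \<mu> \<le> (\<Sum>x\<in>Y. (\<alpha> \<bullet> (x - x0) - \<beta> \<bullet> (x - x0))\<^sup>2)"
        using qm bA unfolding q_def P_def by auto
      have "\<epsilon> * (\<bar>s\<bar> + (\<Sum>\<alpha>\<in>A. \<bar>l \<alpha>\<bar>))
        \<le> K * real (card Y) * s + (\<Sum>\<alpha>\<in>A. l \<alpha> * (K * (\<Sum>x\<in>Y. \<alpha> \<bullet> x) + (\<Sum>x\<in>Y. (\<alpha> \<bullet> (x - x0))\<^sup>2)))"
        by (rule gen_bound[OF assms(4) fY x0Y bA lnn lb ls dl qm' R_def K_def R0_def mp \<epsilon>_def])
      thus ?thesis using 2 unfolding NN_def FF_def phi_def s_def c0_def w_def by simp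
    qed
  qed
  have Ss: "\<forall>g\<in>S. \<forall>\<alpha>. \<alpha> \<notin> A \<longrightarrow> fst g \<alpha> = 0"
    unfolding S_def Lambda_X_def X_circuit_def Nset_def phi_def by auto
  have "circuit_graph X A \<subseteq> TT \<epsilon> c0 w A"
    unfolding circuit_graph_def S_def[symmetric] TT_def
    using cone_bound[OF assms(4) less_imp_le[OF epos] Sb] cone_supp[OF Ss] by blast
  hence "closure (circuit_graph X A) \<subseteq> TT \<epsilon> c0 w A"
    by (rule closure_minimal) (unfold TT_def, rule closed_T[OF assms(4)])
  moreover have "\<not> contains_line (TT \<epsilon> c0 w A)" by (rule no_line_T[OF assms(4) epos])
  ultimately show ?thesis unfolding contains_line_def by blast
qed

end
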